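(* Let $G_1=(V_1,E_1,\ell_1)$ and $G_2=(V_2,E_2,\ell_2)$ be finite node-labeled directed graphs, let $\mathcal{L}:V_1\times V_2\to[0,1]$ satisfy $\mathcal{L}(u,v)=1$ if and only if $\ell_1(u)=\ell_2(v)$, and let $w^+,w^-$ satisfy $0<w^+$, $0<w^-$, $w^++w^-<1$. Define $F^0=\mathcal{L}$ and, for $k\ge1$, $$F^k(u,v)=w^+A^k(N^+_{G_1}(u),N^+_{G_2}(v))+w^-A^k(N^-_{G_1}(u),N^-_{G_2}(v))+(1-w^+-w^-)\mathcal{L}(u,v),$$ where for $S_1\subseteq V_1$, $S_2\subseteq V_2$: $A^k(S_1,S_2)=1$ if $S_1=S_2=\emptyset$; $A^k(S_1,S_2)=0$ if exactly one of $S_1,S_2$ is empty; and otherwise $$A^k(S_1,S_2)=\frac{1}{\sqrt{|S_1|\,|S_2|}}\max_{g}\sum_{(x,y)\in g}F^{k-1}(x,y),$$ the maximum ranging over all sets $g\subseteq S_1\times S_2$ that are the graph of an injective map from the smaller of $S_1,S_2$ into the larger (if $|S_1|\le|S_2|$, injective maps $S_1\to S_2$; otherwise injective maps $S_2\to S_1$, written as pairs $(x,y)$ with $x\in S_1$, $y\in S_2$). Let $\mathrm{FSim}_{bj}(u,v)=\lim_{k\to\infty}F^k(u,v)$ (the limit exists). Then: (P1) $0\le\mathrm{FSim}_{bj}(u,v)\le1$; (P2) $\mathrm{FSim}_{bj}(u,v)=1$ if and only if $u$ is bijectively simulated by $v$, i.e. there exists a bijective simulation $R\subseteq V_1\times V_2$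 with $(u,v)\in R$; (P3) if moreover $\mathcal{L}(u,v)=\mathcal{L}'(v,u)$ for all $u,v$, where $\mathcal{L}'$ is the label function used when computing the same scheme from $G_2$ to $G_1$, then $\mathrm{FSim}_{bj}(u,v)$ computed from $G_1$ to $G_2$ equals $\mathrm{FSim}_{bj}(v,u)$ computed from $G_2$ to $G_1$ (in particular, when $G_1=G_2$ and $\mathcal{L}$ is symmetric, $\mathrm{FSim}_{bj}(u,v)=\mathrm{FSim}_{bj}(v,u)$).
   Context: $N^+_G(u)=\{u':(u,u')\in E(G)\}$ and $N^-_G(u)=\{u':(u',u)\in E(G)\}$. A relation $R\subseteq V_1\times V_2$ is a bijective simulation if for every $(u,v)\in R$: $\ell_1(u)=\ell_2(v)$; there is a bijection $\lambda_1:N^+_{G_1}(u)\to N^+_{G_2}(v)$ with $(u',\lambda_1(u'))\in R$ for all $u'\in N^+_{G_1}(u)$; and there is a bijection $\lambda_2:N^-_{G_1}(u)\to N^-_{G_2}(v)$ with $(u'',\lambda_2(u''))\in R$ for all $u''\in N^-_{G_1}(u)$. *)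

theory Defs
  imports Complex_Main
begin

definition out_nbrs :: "('a \<times> 'a) set \<Rightarrow> 'a \<Rightarrow> 'a set" where
  "out_nbrs E u = {u'. (u, u') \<in> E}"

definition in_nbrs :: "('a \<times> 'a) set \<Rightarrow> 'a \<Rightarrow> 'a set" where
  "in_nbrs E u = {u'. (u', u) \<in> E}"

definition inj_matchings :: "'a set \<Rightarrow> 'b set \<Rightarrow> ('a \<times> 'b) set set" where
  "inj_matchings S1 S2 =
     (if card S1 \<le> card S2
      then {g. \<exists>f. inj_on f S1 \<and> f ` S1 \<subseteq> S2 \<and> g = (\<lambda>x. (x, f x)) ` S1}
      else {g. \<exists>f. inj_on f S2 \<and> f ` S2 \<subseteq> S1 \<and> g = (\<lambda>y. (f y, y)) ` S2})"

definition A_sim :: "('a \<Rightarrow> 'b \<Rightarrow> real) \<Rightarrow> 'a set \<Rightarrow> 'b set \<Rightarrow> real" where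
  "A_sim Fp S1 S2 =
     (if S1 = {} \<and> S2 = {} then 1
      else if S1 = {} \<or> S2 = {} then 0
      else (1 / sqrt (real (card S1) * real (card S2))) *
           Max ((\<lambda>g. \<Sum>(x, y)\<in>g. Fp x y) ` inj_matchings S1 S2))"

primrec F_sim :: "('a \<times> 'a) set \<Rightarrow> ('b \<times> 'b) set \<Rightarrow> ('a \<Rightarrow> 'b \<Rightarrow> real) \<Rightarrow> real \<Rightarrow> real
                  \<Rightarrow> nat \<Rightarrow> 'a \<Rightarrow> 'b \<Rightarrow> real" where
  "F_sim E1 E2 L wp wm 0 = L"
| "F_sim E1 E2 L wp wm (Suc k) =
     (\<lambda>u v. wp * A_sim (F_sim E1 E2 L wp wm k) (out_nbrs E1 u) (out_nbrs E2 v)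
          + wm * A_sim (F_sim E1 E2 L wp wm k) (in_nbrs E1 u) (in_nbrs E2 v)
          + (1 - wp - wm) * L u v)"

definition FSim_bj :: "('a \<times> 'a) set \<Rightarrow> ('b \<times> 'b) set \<Rightarrow> ('a \<Rightarrow> 'b \<Rightarrow> real) \<Rightarrow> real \<Rightarrow> real
                  \<Rightarrow> 'a \<Rightarrow> 'b \<Rightarrow> real" where
  "FSim_bj E1 E2 L wp wm u v = lim (\<lambda>k. F_sim E1 E2 L wp wm k u v)"

definition bij_simulation ::
  "'a set \<Rightarrow> ('a \<times> 'a) set \<Rightarrow> ('a \<Rightarrow> 'l) \<Rightarrow> 'b set \<Rightarrow> ('b \<times> 'b) set \<Rightarrow> ('b \<Rightarrow> 'l)
   \<Rightarrow> ('a \<times> 'b) set \<Rightarrow> bool" where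
  "bij_simulation V1 E1 l1 V2 E2 l2 R \<longleftrightarrow>
     R \<subseteq> V1 \<times> V2 \<and>
     (\<forall>(u, v)\<in>R. l1 u = l2 v \<and>
        (\<exists>lam1. bij_betw lam1 (out_nbrs E1 u) (out_nbrs E2 v) \<and> (\<forall>u'\<in>out_nbrs E1 u. (u', lam1 u') \<in> R)) \<and>
        (\<exists>lam2. bij_betw lam2 (in_nbrs E1 u) (in_nbrs E2 v) \<and> (\<forall>u''\<in>in_nbrs E1 u. (u'', lam2 u'') \<in> R)))"

end

theory Submission imports Defs "HOL-Analysis.Analysis" begin

lemma inj_matchings_props:
  assumes "finite S1" "finite S2" "g \<in> inj_matchings S1 S2"
  shows "g \<subseteq> S1 \<times> S2" "finite g" "card g = min (card S1) (card S2)"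
proof -
  have "g \<subseteq> S1 \<times> S2 \<and> finite g \<and> card g = min (card S1) (card S2)"
  proof (cases "card S1 \<le> card S2")
    case True
    then obtain f where f: "inj_on f S1" "f ` S1 \<subseteq> S2" "g = (\<lambda>x. (x, f x)) ` S1"
      using assms(3) unfolding inj_matchings_def by auto
    have "card g = card S1" using f(3) card_image[OF inj_on_convol_ident] by simp
    then show ?thesis using f True assms(1) by auto
  next
    case False
    then obtain f where f: "inj_on f S2" "f ` S2 \<subseteq> S1" "g = (\<lambda>y. (f y, y)) ` S2"
      using assms(3) unfolding inj_matchings_def by auto
    have "inj_on (\<lambda>y. (f y, y)) S2" by (auto simp: inj_on_def)
    then have "card g = card S2" using f(3) card_image by blast
    then show ?thesis using f False assms(2) by auto
  qed
  then show "g \<subseteq> S1 \<times> S2" "finite g" "card g = min (card S1) (card S2)" by auto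
qed

lemma inj_matchings_finite:
  assumes "finite S1" "finite S2"
  shows "finite (inj_matchings S1 S2)"
proof -
  have "inj_matchings S1 S2 \<subseteq> Pow (S1 \<times> S2)"
    using inj_matchings_props(1)[OF assms] by blast
  then show ?thesis using assms by (meson finite_Pow_iff finite_SigmaI finite_subset)
qed

lemma inj_matchings_nonempty:
  assumes "finite S1" "finite S2"
  shows "inj_matchings S1 S2 \<noteq> {}"
proof (cases "card S1 \<le> card S2")
  case True
  then obtain f where "f ` S1 \<subseteq> S2" "inj_on f S1" using card_le_inj assms by blast
  then show ?thesis using True unfolding inj_matchings_def by auto
next
  case False
  then obtain f where "f ` S2 \<subseteq> S1" "inj_on f S2" using card_le_inj assms
    by (metis nat_le_linear)
  then show ?thesis using False unfolding inj_matchings_def by auto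
qed

lemma Max_diff:
  fixes a b :: "'x \<Rightarrow> real"
  assumes "finite M" "M \<noteq> {}" "\<forall>g\<in>M. \<bar>a g - b g\<bar> \<le> c"
  shows "\<bar>Max (a ` M) - Max (b ` M)\<bar> \<le> c"
proof -
  have "Max (a ` M) \<in> a ` M" using Max_in[of "a ` M"] assms by simp
  then obtain g1 where g1: "g1 \<in> M" "Max (a ` M) = a g1" by auto
  have "Max (b ` M) \<in> b ` M" using Max_in[of "b ` M"] assms by simp
  then obtain g2 where g2: "g2 \<in> M" "Max (b ` M) = b g2" by auto
  have "b g1 \<le> Max (b ` M)" using g1 assms by auto
  moreover have "a g2 \<le> Max (a ` M)" using g2 assms by auto
  moreover have "\<bar>a g1 - b g1\<bar> \<le> c" "\<bar>a g2 - b g2\<bar> \<le> c" using g1 g2 assms(3) by auto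
  ultimately show ?thesis using g1 g2 by linarith
qed

lemma sum_diff_bound:
  fixes F G :: "'a \<Rightarrow> 'b \<Rightarrow> real"
  assumes "finite g" "g \<subseteq> S1 \<times> S2" "\<forall>x\<in>S1. \<forall>y\<in>S2. \<bar>F x y - G x y\<bar> \<le> e"
  shows "\<bar>(\<Sum>(x, y)\<in>g. F x y) - (\<Sum>(x, y)\<in>g. G x y)\<bar> \<le> real (card g) * e"
proof -
  have "\<bar>(\<Sum>(x, y)\<in>g. F x y) - (\<Sum>(x, y)\<in>g. G x y)\<bar> = \<bar>\<Sum>p\<in>g. (case p of (x, y) \<Rightarrow> F x y - G x y)\<bar>"
    by (simp add: sum_subtractf[symmetric] case_prod_beta)
  also have "\<dots> \<le> (\<Sum>p\<in>g. \<bar>case p of (x, y) \<Rightarrow> F x y - G x y\<bar>)" by (rule sum_abs)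
  also have "\<dots> \<le> (\<Sum>p\<in>g. e)"
    apply (rule sum_mono) using assms(2,3) by auto
  finally show ?thesis by simp
qed

lemma min_le_sqrt:
  assumes "a > 0" "b > 0"
  shows "real (min a b) \<le> sqrt (real a * real b)"
proof (rule real_le_rsqrt)
  show "(real (min a b))\<^sup>2 \<le> real a * real b"
    by (cases "a \<le> b") (auto simp: power2_eq_square intro: mult_left_mono mult_right_mono)
qed

lemma A_sim_lip:
  fixes F G :: "'a \<Rightarrow> 'b \<Rightarrow> real"
  assumes "finite S1" "finite S2" "e \<ge> 0" "\<forall>x\<in>S1. \<forall>y\<in>S2. \<bar>F x y - G x y\<bar> \<le> e"
  shows "\<bar>A_sim F S1 S2 - A_sim G S1 S2\<bar> \<le> e"
proof (cases "S1 = {} \<or> S2 = {}")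
  case True
  then show ?thesis using assms(3) unfolding A_sim_def by auto
next
  case False
  define M where "M = inj_matchings S1 S2"
  define m where "m = min (card S1) (card S2)"
  define s where "s = sqrt (real (card S1) * real (card S2))"
  have c1: "card S1 > 0" "card S2 > 0" using False assms by auto
  have ms: "real m \<le> s" unfolding m_def s_def using min_le_sqrt c1 by blast
  have s0: "s > 0" unfolding s_def using c1 by simp
  have "\<forall>g\<in>M. \<bar>(\<Sum>(x, y)\<in>g. F x y) - (\<Sum>(x, y)\<in>g. G x y)\<bar> \<le> real m * e"
    using sum_diff_bound inj_matchings_props[OF assms(1,2)] assms(4) unfolding M_def m_def by metis
  then have "\<bar>Max ((\<lambda>g. \<Sum>(x, y)\<in>g. F x y) ` M) - Max ((\<lambda>g. \<Sum>(x, y)\<in>g. G x y) ` M)\<bar> \<le> real m * e"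
    using Max_diff inj_matchings_finite inj_matchings_nonempty assms(1,2) unfolding M_def by metis
  moreover have "real m * e \<le> s * e" using ms assms(3) by (simp add: mult_right_mono)
  ultimately have "\<bar>Max ((\<lambda>g. \<Sum>(x, y)\<in>g. F x y) ` M) - Max ((\<lambda>g. \<Sum>(x, y)\<in>g. G x y) ` M)\<bar> \<le> s * e"
    by linarith
  then have "\<bar>1 / s * Max ((\<lambda>g. \<Sum>(x, y)\<in>g. F x y) ` M) - 1 / s * Max ((\<lambda>g. \<Sum>(x, y)\<in>g. G x y) ` M)\<bar> \<le> e"
    using s0 by (simp add: right_diff_distrib[symmetric] abs_mult divide_simps mult.commute)
  then show ?thesis using False unfolding A_sim_def M_def s_def by simp
qed


lemma sum_le_card:
  fixes F :: "'a \<Rightarrow> 'b \<Rightarrow> real"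
  assumes "finite g" "g \<subseteq> S1 \<times> S2" "\<forall>x\<in>S1. \<forall>y\<in>S2. F x y \<le> 1"
  shows "(\<Sum>(x, y)\<in>g. F x y) \<le> real (card g)"
proof -
  have "(\<Sum>(x, y)\<in>g. F x y) \<le> (\<Sum>p\<in>g. 1)"
    apply (rule sum_mono) using assms by auto
  then show ?thesis by simp
qed

lemma sum_ge_0:
  fixes F :: "'a \<Rightarrow> 'b \<Rightarrow> real"
  assumes "g \<subseteq> S1 \<times> S2" "\<forall>x\<in>S1. \<forall>y\<in>S2. 0 \<le> F x y"
  shows "0 \<le> (\<Sum>(x, y)\<in>g. F x y)"
  apply (rule sum_nonneg) using assms by auto

lemma A_sim_Max_le:
  fixes F :: "'a \<Rightarrow> 'b \<Rightarrow> real"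
  assumes "finite S1" "finite S2" "\<forall>x\<in>S1. \<forall>y\<in>S2. F x y \<le> 1"
  shows "Max ((\<lambda>g. \<Sum>(x, y)\<in>g. F x y) ` inj_matchings S1 S2) \<le> real (min (card S1) (card S2))"
proof -
  have "Max ((\<lambda>g. \<Sum>(x, y)\<in>g. F x y) ` inj_matchings S1 S2) \<in> (\<lambda>g. \<Sum>(x, y)\<in>g. F x y) ` inj_matchings S1 S2"
    using Max_in[OF finite_imageI[OF inj_matchings_finite[OF assms(1,2)]]] inj_matchings_nonempty[OF assms(1,2)] by simp
  then obtain g where g: "g \<in> inj_matchings S1 S2"
    "Max ((\<lambda>g. \<Sum>(x, y)\<in>g. F x y) ` inj_matchings S1 S2) = (\<Sum>(x, y)\<in>g. F x y)" by auto
  show ?thesis using g sum_le_card[of g S1 S2 F] inj_matchings_props[OF assms(1,2) g(1)] assms(3) by simp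
qed

lemma A_sim_bounds:
  fixes F :: "'a \<Rightarrow> 'b \<Rightarrow> real"
  assumes "finite S1" "finite S2" "\<forall>x\<in>S1. \<forall>y\<in>S2. 0 \<le> F x y \<and> F x y \<le> 1"
  shows "0 \<le> A_sim F S1 S2 \<and> A_sim F S1 S2 \<le> 1"
proof (cases "S1 = {} \<or> S2 = {}")
  case True
  then show ?thesis unfolding A_sim_def by auto
next
  case False
  define MX where "MX = Max ((\<lambda>g. \<Sum>(x, y)\<in>g. F x y) ` inj_matchings S1 S2)"
  define s where "s = sqrt (real (card S1) * real (card S2))"
  have c1: "card S1 > 0" "card S2 > 0" using False assms by auto
  have s0: "s > 0" unfolding s_def using c1 by simp
  have "MX \<le> real (min (card S1) (card S2))" unfolding MX_def
    using A_sim_Max_le[OF assms(1,2)] assms(3) by auto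
  also have "\<dots> \<le> s" unfolding s_def using min_le_sqrt c1 by blast
  finally have up: "MX \<le> s" .
  obtain g where g: "g \<in> inj_matchings S1 S2" using inj_matchings_nonempty[OF assms(1,2)] by blast
  have "(\<Sum>(x, y)\<in>g. F x y) \<le> MX" unfolding MX_def
    using g by (intro Max_ge finite_imageI inj_matchings_finite assms(1,2)) simp
  moreover have "0 \<le> (\<Sum>(x, y)\<in>g. F x y)"
    using sum_ge_0 inj_matchings_props(1)[OF assms(1,2) g] assms(3) by blast
  ultimately have "0 \<le> MX" by linarith
  then have "0 \<le> 1 / s * MX \<and> 1 / s * MX \<le> 1" using up s0 by (simp add: divide_simps)
  then show ?thesis using False unfolding A_sim_def MX_def s_def by simp
qed

lemma A_sim_one_iff:
  fixes F :: "'a \<Rightarrow> 'b \<Rightarrow> real"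
  assumes "finite S1" "finite S2" "\<forall>x\<in>S1. \<forall>y\<in>S2. F x y \<le> 1"
  shows "A_sim F S1 S2 = 1 \<longleftrightarrow> (\<exists>lam. bij_betw lam S1 S2 \<and> (\<forall>x\<in>S1. F x (lam x) = 1))"
proof (cases "S1 = {} \<or> S2 = {}")
  case True
  show ?thesis
  proof (cases "S1 = {} \<and> S2 = {}")
    case True
    then show ?thesis unfolding A_sim_def bij_betw_def by simp
  next
    case False
    then have "A_sim F S1 S2 = 0" using \<open>S1 = {} \<or> S2 = {}\<close> unfolding A_sim_def by simp
    moreover have "\<not> bij_betw lam S1 S2" for lam
      using False \<open>S1 = {} \<or> S2 = {}\<close> unfolding bij_betw_def by auto
    ultimately show ?thesis by simp
  qed
next
  case False
  define MX where "MX = Max ((\<lambda>g. \<Sum>(x, y)\<in>g. F x y) ` inj_matchings S1 S2)"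
  define s where "s = sqrt (real (card S1) * real (card S2))"
  define m where "m = min (card S1) (card S2)"
  have c1: "card S1 > 0" "card S2 > 0" using False assms by auto
  have s0: "s > 0" unfolding s_def using c1 by simp
  have A: "A_sim F S1 S2 = 1 / s * MX" using False unfolding A_sim_def MX_def s_def by simp
  have up: "MX \<le> real m" unfolding MX_def m_def using A_sim_Max_le[OF assms(1,2)] assms(3) by auto
  have ms: "real m \<le> s" unfolding s_def m_def using min_le_sqrt c1 by blast
  show ?thesis
  proof
    assume "A_sim F S1 S2 = 1"
    then have MXs: "MX = s" using A s0 by (simp add: divide_simps)
    then have "real m = s" using up ms by linarith
    have "s\<^sup>2 = real (card S1) * real (card S2)" unfolding s_def by simp
    then have "real m * real m = real (card S1) * real (card S2)"
      using \<open>real m = s\<close> by (simp add: power2_eq_square)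
    then have "m * m = card S1 * card S2" by (metis of_nat_eq_iff of_nat_mult)
    then have eq: "card S1 = card S2"
    proof (cases "card S1 \<le> card S2")
      case True
      then have "card S1 * card S1 = card S1 * card S2" using \<open>m * m = _\<close> unfolding m_def by (simp add: min_def)
      then show ?thesis using c1 by simp
    next
      case False
      then have "card S2 * card S2 = card S1 * card S2" using \<open>m * m = _\<close> unfolding m_def by (simp add: min_def)
      then show ?thesis using c1 by simp
    qed
    have "MX \<in> (\<lambda>g. \<Sum>(x, y)\<in>g. F x y) ` inj_matchings S1 S2"
      unfolding MX_def using Max_in[OF finite_imageI[OF inj_matchings_finite[OF assms(1,2)]]] inj_matchings_nonempty[OF assms(1,2)] by simp
    then obtain g where g: "g \<in> inj_matchings S1 S2" "MX = (\<Sum>(x, y)\<in>g. F x y)" by auto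
    then obtain f where f: "inj_on f S1" "f ` S1 \<subseteq> S2" "g = (\<lambda>x. (x, f x)) ` S1"
      using eq unfolding inj_matchings_def by auto
    have "(\<Sum>(x, y)\<in>g. F x y) = (\<Sum>x\<in>S1. F x (f x))"
      unfolding f(3) by (subst sum.reindex[OF inj_on_convol_ident]) auto
    then have "(\<Sum>x\<in>S1. F x (f x)) = real (card S1)"
      using g(2) MXs \<open>real m = s\<close> eq unfolding m_def by simp
    then have "(\<Sum>x\<in>S1. 1 - F x (f x)) = 0" by (simp add: sum_subtractf)
    moreover have "\<forall>x\<in>S1. 0 \<le> 1 - F x (f x)" using assms(3) f(2) by auto
    ultimately have "\<forall>x\<in>S1. 1 - F x (f x) = 0"
      using sum_nonneg_eq_0_iff[OF assms(1), of "\<lambda>x. 1 - F x (f x)"] by blast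
    then have one: "\<forall>x\<in>S1. F x (f x) = 1" by simp
    have "card (f ` S1) = card S2" using card_image[OF f(1)] eq by simp
    then have "f ` S1 = S2" using card_subset_eq[OF assms(2) f(2)] by simp
    then have "bij_betw f S1 S2" using f(1) unfolding bij_betw_def by simp
    then show "\<exists>lam. bij_betw lam S1 S2 \<and> (\<forall>x\<in>S1. F x (lam x) = 1)" using one by blast
  next
    assume "\<exists>lam. bij_betw lam S1 S2 \<and> (\<forall>x\<in>S1. F x (lam x) = 1)"
    then obtain lam where lam: "bij_betw lam S1 S2" "\<forall>x\<in>S1. F x (lam x) = 1" by blast
    have eq: "card S1 = card S2" using bij_betw_same_card[OF lam(1)] .
    have gin: "(\<lambda>x. (x, lam x)) ` S1 \<in> inj_matchings S1 S2"
      using lam(1) eq unfolding inj_matchings_def bij_betw_def by auto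
    have "(\<Sum>(x, y)\<in>(\<lambda>x. (x, lam x)) ` S1. F x y) = (\<Sum>x\<in>S1. F x (lam x))"
      by (subst sum.reindex[OF inj_on_convol_ident]) auto
    also have "\<dots> = real (card S1)" using lam(2) by simp
    finally have "real (card S1) \<in> (\<lambda>g. \<Sum>(x, y)\<in>g. F x y) ` inj_matchings S1 S2"
      using gin by (metis (no_types, lifting) image_eqI)
    then have "real (card S1) \<le> MX" unfolding MX_def
      by (intro Max_ge finite_imageI inj_matchings_finite assms(1,2))
    moreover have "real m = real (card S1)" unfolding m_def using eq by simp
    moreover have "s = real (card S1)" unfolding s_def using eq by simp
    ultimately show "A_sim F S1 S2 = 1" using A up s0 by simp
  qed
qed


lemma graph_inv:
  assumes "finite A" "finite B" "card A = card B" "inj_on h A" "h ` A \<subseteq> B"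
  shows "\<exists>f. inj_on f B \<and> f ` B \<subseteq> A \<and> (\<lambda>y. (y, h y)) ` A = (\<lambda>x. (f x, x)) ` B"
proof -
  have "card (h ` A) = card B" using card_image[OF assms(4)] assms(3) by simp
  then have hB: "h ` A = B" using card_subset_eq[OF assms(2,5)] by simp
  then have bij: "bij_betw h A B" using assms(4) unfolding bij_betw_def by simp
  define f where "f = inv_into A h"
  have bf: "bij_betw f B A" unfolding f_def using bij_betw_inv_into[OF bij] .
  have "(\<lambda>y. (y, h y)) ` A = (\<lambda>x. (f x, x)) ` B"
  proof
    show "(\<lambda>y. (y, h y)) ` A \<subseteq> (\<lambda>x. (f x, x)) ` B"
    proof
      fix p assume "p \<in> (\<lambda>y. (y, h y)) ` A"
      then obtain y where y: "y \<in> A" "p = (y, h y)" by auto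
      have "f (h y) = y" unfolding f_def using inv_into_f_f[OF assms(4) y(1)] .
      moreover have "h y \<in> B" using y(1) hB by auto
      ultimately show "p \<in> (\<lambda>x. (f x, x)) ` B" using y(2) by (metis (no_types, lifting) image_eqI)
    qed
  next
    show "(\<lambda>x. (f x, x)) ` B \<subseteq> (\<lambda>y. (y, h y)) ` A"
    proof
      fix p assume "p \<in> (\<lambda>x. (f x, x)) ` B"
      then obtain x where x: "x \<in> B" "p = (f x, x)" by auto
      have "h (f x) = x" unfolding f_def using f_inv_into_f[of x h A] x(1) hB by simp
      moreover have "f x \<in> A" using x(1) bf bij_betwE by blast
      ultimately show "p \<in> (\<lambda>y. (y, h y)) ` A" using x(2) by (metis (no_types, lifting) image_eqI)
    qed
  qed
  then show ?thesis using bf unfolding bij_betw_def by blast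
qed

lemma img_setcomp: "k ` {g. \<exists>f. P f \<and> Q f \<and> g = h f} = {g. \<exists>f. P f \<and> Q f \<and> g = k (h f)}"
  by auto

abbreviation swp :: "'x \<times> 'y \<Rightarrow> 'y \<times> 'x" where "swp \<equiv> (\<lambda>(x, y). (y, x))"

lemma swp_graph1: "swp ` ((\<lambda>x. (x, f x)) ` A) = (\<lambda>x. (f x, x)) ` A"
  by (auto simp: image_image)
lemma swp_graph2: "swp ` ((\<lambda>x. (f x, x)) ` A) = (\<lambda>x. (x, f x)) ` A"
  by (auto simp: image_image)

lemma inj_matchings_swap:
  assumes "finite S1" "finite S2"
  shows "inj_matchings S2 S1 = (\<lambda>g. swp ` g) ` inj_matchings S1 S2"
proof (cases "card S1 = card S2")
  case eq: True
  show ?thesis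
  proof
    show "inj_matchings S2 S1 \<subseteq> (\<lambda>g. swp ` g) ` inj_matchings S1 S2"
    proof
      fix g assume "g \<in> inj_matchings S2 S1"
      then obtain h where h: "inj_on h S2" "h ` S2 \<subseteq> S1" "g = (\<lambda>x. (x, h x)) ` S2"
        using eq unfolding inj_matchings_def by auto
      obtain f where f: "inj_on f S1" "f ` S1 \<subseteq> S2" "(\<lambda>y. (y, h y)) ` S2 = (\<lambda>x. (f x, x)) ` S1"
        using graph_inv[OF assms(2,1) eq[symmetric] h(1,2)] by blast
      have "(\<lambda>x. (x, f x)) ` S1 \<in> inj_matchings S1 S2"
        using eq f unfolding inj_matchings_def by auto
      moreover have "g = swp ` ((\<lambda>x. (x, f x)) ` S1)" using h(3) f(3) swp_graph1 by metis
      ultimately show "g \<in> (\<lambda>g. swp ` g) ` inj_matchings S1 S2" by blast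
    qed
  next
    show "(\<lambda>g. swp ` g) ` inj_matchings S1 S2 \<subseteq> inj_matchings S2 S1"
    proof
      fix g assume "g \<in> (\<lambda>g. swp ` g) ` inj_matchings S1 S2"
      then obtain g0 where g0: "g0 \<in> inj_matchings S1 S2" "g = swp ` g0" by auto
      then obtain f where f: "inj_on f S1" "f ` S1 \<subseteq> S2" "g0 = (\<lambda>x. (x, f x)) ` S1"
        using eq unfolding inj_matchings_def by auto
      obtain h where h: "inj_on h S2" "h ` S2 \<subseteq> S1" "(\<lambda>y. (y, f y)) ` S1 = (\<lambda>x. (h x, x)) ` S2"
        using graph_inv[OF assms(1,2) eq f(1,2)] by blast
      have "g = (\<lambda>x. (x, h x)) ` S2" using g0(2) f(3) h(3) swp_graph2 swp_graph1 by metis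
      then show "g \<in> inj_matchings S2 S1" using eq h unfolding inj_matchings_def by auto
    qed
  qed
next
  case False
  show ?thesis
  proof (cases "card S1 < card S2")
    case True
    have L: "inj_matchings S2 S1 = {g. \<exists>f. inj_on f S1 \<and> f ` S1 \<subseteq> S2 \<and> g = (\<lambda>y. (f y, y)) ` S1}"
      using True unfolding inj_matchings_def by auto
    have R: "inj_matchings S1 S2 = {g. \<exists>f. inj_on f S1 \<and> f ` S1 \<subseteq> S2 \<and> g = (\<lambda>x. (x, f x)) ` S1}"
      using True unfolding inj_matchings_def by auto
    show ?thesis unfolding L R
    proof
      show "{g. \<exists>f. inj_on f S1 \<and> f ` S1 \<subseteq> S2 \<and> g = (\<lambda>y. (f y, y)) ` S1}
        \<subseteq> (\<lambda>g. swp ` g) ` {g. \<exists>f. inj_on f S1 \<and> f ` S1 \<subseteq> S2 \<and> g = (\<lambda>x. (x, f x)) ` S1}"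
        unfolding img_setcomp swp_graph1 by (rule order.refl)
      show "(\<lambda>g. swp ` g) ` {g. \<exists>f. inj_on f S1 \<and> f ` S1 \<subseteq> S2 \<and> g = (\<lambda>x. (x, f x)) ` S1}
        \<subseteq> {g. \<exists>f. inj_on f S1 \<and> f ` S1 \<subseteq> S2 \<and> g = (\<lambda>y. (f y, y)) ` S1}"
        unfolding img_setcomp swp_graph1 by (rule order.refl)
    qed
  next
    case False2: False
    have L: "inj_matchings S2 S1 = {g. \<exists>f. inj_on f S2 \<and> f ` S2 \<subseteq> S1 \<and> g = (\<lambda>x. (x, f x)) ` S2}"
      using False False2 unfolding inj_matchings_def by auto
    have R: "inj_matchings S1 S2 = {g. \<exists>f. inj_on f S2 \<and> f ` S2 \<subseteq> S1 \<and> g = (\<lambda>y. (f y, y)) ` S2}"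
      using False False2 unfolding inj_matchings_def by auto
    show ?thesis unfolding L R
    proof
      show "{g. \<exists>f. inj_on f S2 \<and> f ` S2 \<subseteq> S1 \<and> g = (\<lambda>x. (x, f x)) ` S2}
        \<subseteq> (\<lambda>g. swp ` g) ` {g. \<exists>f. inj_on f S2 \<and> f ` S2 \<subseteq> S1 \<and> g = (\<lambda>y. (f y, y)) ` S2}"
        unfolding img_setcomp swp_graph2 by (rule order.refl)
      show "(\<lambda>g. swp ` g) ` {g. \<exists>f. inj_on f S2 \<and> f ` S2 \<subseteq> S1 \<and> g = (\<lambda>y. (f y, y)) ` S2}
        \<subseteq> {g. \<exists>f. inj_on f S2 \<and> f ` S2 \<subseteq> S1 \<and> g = (\<lambda>x. (x, f x)) ` S2}"
        unfolding img_setcomp swp_graph2 by (rule order.refl)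
    qed
  qed
qed

lemma sum_swp:
  fixes F :: "'a \<Rightarrow> 'b \<Rightarrow> real"
  shows "(\<Sum>(y, x)\<in>swp ` g. F x y) = (\<Sum>(x, y)\<in>g. F x y)"
proof -
  have inj: "inj_on swp g" by (auto simp: inj_on_def)
  have "(\<Sum>(y, x)\<in>swp ` g. F x y) = (\<Sum>p\<in>g. (\<lambda>(y, x). F x y) (swp p))"
    using sum.reindex[OF inj, of "\<lambda>(y, x). F x y"] by (simp add: comp_def)
  also have "\<dots> = (\<Sum>(x, y)\<in>g. F x y)" by (rule sum.cong) auto
  finally show ?thesis .
qed

lemma A_sim_flip:
  fixes F :: "'a \<Rightarrow> 'b \<Rightarrow> real"
  assumes "finite S1" "finite S2"
  shows "A_sim F S1 S2 = A_sim (\<lambda>y x. F x y) S2 S1"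
proof (cases "S1 = {} \<or> S2 = {}")
  case True
  then show ?thesis unfolding A_sim_def by auto
next
  case False
  have "(\<lambda>g. \<Sum>(y, x)\<in>g. F x y) ` inj_matchings S2 S1 = (\<lambda>g. \<Sum>(x, y)\<in>g. F x y) ` inj_matchings S1 S2"
    unfolding inj_matchings_swap[OF assms] image_image sum_swp ..
  then show ?thesis using False unfolding A_sim_def by (simp add: mult.commute)
qed


lemma nbrs_sub:
  assumes "E \<subseteq> V \<times> V"
  shows "out_nbrs E u \<subseteq> V" "in_nbrs E u \<subseteq> V"
  using assms unfolding out_nbrs_def in_nbrs_def by auto

lemma three_one:
  fixes a b l wp wm :: real
  assumes "0 < wp" "0 < wm" "wp + wm < 1" "a \<le> 1" "b \<le> 1" "l \<le> 1"
    "wp * a + wm * b + (1 - wp - wm) * l = 1"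
  shows "a = 1" "b = 1" "l = 1"
proof -
  have h1: "0 \<le> wp * (1 - a)" "0 \<le> wm * (1 - b)" "0 \<le> (1 - wp - wm) * (1 - l)"
    using assms by auto
  have "wp * (1 - a) + wm * (1 - b) + (1 - wp - wm) * (1 - l) = 0"
    using assms(7) by (simp add: algebra_simps)
  then have "wp * (1 - a) = 0" "wm * (1 - b) = 0" "(1 - wp - wm) * (1 - l) = 0"
    using h1 by linarith+
  then show "a = 1" "b = 1" "l = 1" using assms(1,2,3) by auto
qed

lemma comb_bounds:
  fixes a b l wp wm :: real
  assumes "0 < wp" "0 < wm" "wp + wm < 1" "0 \<le> a" "a \<le> 1" "0 \<le> b" "b \<le> 1" "0 \<le> l" "l \<le> 1"
  shows "0 \<le> wp * a + wm * b + (1 - wp - wm) * l \<and> wp * a + wm * b + (1 - wp - wm) * l \<le> 1"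
proof -
  have "wp * a \<le> wp" "wm * b \<le> wm" "(1 - wp - wm) * l \<le> 1 - wp - wm"
    using assms by (auto intro: mult_left_le)
  moreover have "0 \<le> wp * a" "0 \<le> wm * b" "0 \<le> (1 - wp - wm) * l" using assms by auto
  ultimately show ?thesis by linarith
qed

theorem theorem3:
  fixes V1 :: "'a set" and E1 :: "('a \<times> 'a) set" and l1 :: "'a \<Rightarrow> 'l"
    and V2 :: "'b set" and E2 :: "('b \<times> 'b) set" and l2 :: "'b \<Rightarrow> 'l"
    and L :: "'a \<Rightarrow> 'b \<Rightarrow> real" and L' :: "'b \<Rightarrow> 'a \<Rightarrow> real"
    and wp wm :: real
  assumes fin1: "finite V1" and fin2: "finite V2"
    and E1: "E1 \<subseteq> V1 \<times> V1" and E2: "E2 \<subseteq> V2 \<times> V2"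
    and L_range: "\<forall>u\<in>V1. \<forall>v\<in>V2. 0 \<le> L u v \<and> L u v \<le> 1"
    and L_one: "\<forall>u\<in>V1. \<forall>v\<in>V2. L u v = 1 \<longleftrightarrow> l1 u = l2 v"
    and L'_range: "\<forall>v\<in>V2. \<forall>u\<in>V1. 0 \<le> L' v u \<and> L' v u \<le> 1"
    and L'_one: "\<forall>v\<in>V2. \<forall>u\<in>V1. L' v u = 1 \<longleftrightarrow> l2 v = l1 u"
    and w: "0 < wp" "0 < wm" "wp + wm < 1"
  shows "(\<forall>u\<in>V1. \<forall>v\<in>V2. convergent (\<lambda>k. F_sim E1 E2 L wp wm k u v))
       \<and> (\<forall>u\<in>V1. \<forall>v\<in>V2. 0 \<le> FSim_bj E1 E2 L wp wm u v \<and> FSim_bj E1 E2 L wp wm u v \<le> 1)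
       \<and> (\<forall>u\<in>V1. \<forall>v\<in>V2. FSim_bj E1 E2 L wp wm u v = 1 \<longleftrightarrow>
              (\<exists>R. bij_simulation V1 E1 l1 V2 E2 l2 R \<and> (u, v) \<in> R))
       \<and> ((\<forall>u\<in>V1. \<forall>v\<in>V2. L u v = L' v u) \<longrightarrow>
            (\<forall>u\<in>V1. \<forall>v\<in>V2. FSim_bj E1 E2 L wp wm u v = FSim_bj E2 E1 L' wp wm v u))"
proof -
  define F where "F = F_sim E1 E2 L wp wm"
  define G where "G = FSim_bj E1 E2 L wp wm"
  define q where "q = wp + wm"
  have o1: "u \<in> V1 \<Longrightarrow> out_nbrs E1 u \<subseteq> V1 \<and> finite (out_nbrs E1 u)" for u
    using nbrs_sub[OF E1] fin1 finite_subset by metis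
  have i1: "u \<in> V1 \<Longrightarrow> in_nbrs E1 u \<subseteq> V1 \<and> finite (in_nbrs E1 u)" for u
    using nbrs_sub[OF E1] fin1 finite_subset by metis
  have o2: "v \<in> V2 \<Longrightarrow> out_nbrs E2 v \<subseteq> V2 \<and> finite (out_nbrs E2 v)" for v
    using nbrs_sub[OF E2] fin2 finite_subset by metis
  have i2: "v \<in> V2 \<Longrightarrow> in_nbrs E2 v \<subseteq> V2 \<and> finite (in_nbrs E2 v)" for v
    using nbrs_sub[OF E2] fin2 finite_subset by metis
  have FS: "F (Suc k) u v = wp * A_sim (F k) (out_nbrs E1 u) (out_nbrs E2 v)
          + wm * A_sim (F k) (in_nbrs E1 u) (in_nbrs E2 v) + (1 - wp - wm) * L u v" for k u v
    unfolding F_def by simp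
  have F0: "F 0 = L" unfolding F_def by simp
  have bnd: "\<forall>u\<in>V1. \<forall>v\<in>V2. 0 \<le> F k u v \<and> F k u v \<le> 1" for k
  proof (induction k)
    case 0
    then show ?case using L_range F0 by simp
  next
    case (Suc k)
    show ?case
    proof (intro ballI)
      fix u v assume uv: "u \<in> V1" "v \<in> V2"
      have a: "0 \<le> A_sim (F k) (out_nbrs E1 u) (out_nbrs E2 v) \<and> A_sim (F k) (out_nbrs E1 u) (out_nbrs E2 v) \<le> 1"
        using A_sim_bounds[of "out_nbrs E1 u" "out_nbrs E2 v" "F k"] o1[OF uv(1)] o2[OF uv(2)] Suc by blast
      have b: "0 \<le> A_sim (F k) (in_nbrs E1 u) (in_nbrs E2 v) \<and> A_sim (F k) (in_nbrs E1 u) (in_nbrs E2 v) \<le> 1"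
        using A_sim_bounds[of "in_nbrs E1 u" "in_nbrs E2 v" "F k"] i1[OF uv(1)] i2[OF uv(2)] Suc by blast
      show "0 \<le> F (Suc k) u v \<and> F (Suc k) u v \<le> 1"
        unfolding FS using comb_bounds[OF w] a b L_range uv by blast
    qed
  qed
  have q0: "0 \<le> q" "q < 1" using w unfolding q_def by auto
  have contr: "\<forall>u\<in>V1. \<forall>v\<in>V2. \<bar>F (Suc k) u v - F k u v\<bar> \<le> q ^ k" for k
  proof (induction k)
    case 0
    show ?case using bnd[of 0] bnd[of 1] by fastforce
  next
    case (Suc k)
    show ?case
    proof (intro ballI)
      fix u v assume uv: "u \<in> V1" "v \<in> V2"
      have a: "\<bar>A_sim (F (Suc k)) (out_nbrs E1 u) (out_nbrs E2 v) - A_sim (F k) (out_nbrs E1 u) (out_nbrs E2 v)\<bar> \<le> q ^ k"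
        using A_sim_lip[of "out_nbrs E1 u" "out_nbrs E2 v" "q ^ k" "F (Suc k)" "F k"] o1[OF uv(1)] o2[OF uv(2)] Suc q0 by auto
      have b: "\<bar>A_sim (F (Suc k)) (in_nbrs E1 u) (in_nbrs E2 v) - A_sim (F k) (in_nbrs E1 u) (in_nbrs E2 v)\<bar> \<le> q ^ k"
        using A_sim_lip[of "in_nbrs E1 u" "in_nbrs E2 v" "q ^ k" "F (Suc k)" "F k"] i1[OF uv(1)] i2[OF uv(2)] Suc q0 by auto
      define x where "x = A_sim (F (Suc k)) (out_nbrs E1 u) (out_nbrs E2 v) - A_sim (F k) (out_nbrs E1 u) (out_nbrs E2 v)"
      define y where "y = A_sim (F (Suc k)) (in_nbrs E1 u) (in_nbrs E2 v) - A_sim (F k) (in_nbrs E1 u) (in_nbrs E2 v)"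
      have dd: "F (Suc (Suc k)) u v - F (Suc k) u v = wp * x + wm * y"
        unfolding FS[of "Suc k"] FS[of k] x_def y_def by (simp add: algebra_simps)
      have "\<bar>wp * x + wm * y\<bar> \<le> \<bar>wp * x\<bar> + \<bar>wm * y\<bar>" by (rule abs_triangle_ineq)
      also have "\<dots> = wp * \<bar>x\<bar> + wm * \<bar>y\<bar>" using w by (simp add: abs_mult)
      finally have "\<bar>wp * x + wm * y\<bar> \<le> wp * \<bar>x\<bar> + wm * \<bar>y\<bar>" .
      moreover have "wp * \<bar>x\<bar> \<le> wp * q ^ k" "wm * \<bar>y\<bar> \<le> wm * q ^ k"
        using a b w unfolding x_def y_def by (auto intro: mult_left_mono)
      ultimately show "\<bar>F (Suc (Suc k)) u v - F (Suc k) u v\<bar> \<le> q ^ Suc k"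
        unfolding q_def dd by (simp add: algebra_simps)
    qed
  qed
  have conv: "convergent (\<lambda>k. F k u v)" if uv: "u \<in> V1" "v \<in> V2" for u v
  proof -
    define d where "d i = F (Suc i) u v - F i u v" for i
    have "summable d"
      by (rule summable_comparison_test'[OF summable_geometric[of q], of 0])
         (use q0 contr uv in \<open>auto simp: d_def\<close>)
    then have "(\<lambda>k. F 0 u v + (\<Sum>i<k. d i)) \<longlonglongrightarrow> F 0 u v + suminf d"
      by (intro tendsto_add tendsto_const summable_LIMSEQ)
    moreover have "(\<lambda>k. F 0 u v + (\<Sum>i<k. d i)) = (\<lambda>k. F k u v)"
      unfolding d_def by (rule ext) (simp add: sum_lessThan_telescope[of "\<lambda>i. F i u v"])
    ultimately show ?thesis unfolding convergent_def by auto
  qed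
  have lim: "(\<lambda>k. F k u v) \<longlonglongrightarrow> G u v" if "u \<in> V1" "v \<in> V2" for u v
    using conv[OF that] unfolding G_def FSim_bj_def F_def convergent_LIMSEQ_iff by simp
  have Gb: "0 \<le> G u v \<and> G u v \<le> 1" if uv: "u \<in> V1" "v \<in> V2" for u v
  proof
    show "0 \<le> G u v"
      by (rule tendsto_lowerbound[OF lim[OF uv]]) (use bnd uv in \<open>auto\<close>)
    show "G u v \<le> 1"
      by (rule tendsto_upperbound[OF lim[OF uv]]) (use bnd uv in \<open>auto\<close>)
  qed
  have Acont: "(\<lambda>k. A_sim (F k) S1 S2) \<longlonglongrightarrow> A_sim G S1 S2"
    if S: "S1 \<subseteq> V1" "S2 \<subseteq> V2" for S1 S2
  proof -
    have f: "finite S1" "finite S2" using S fin1 fin2 finite_subset by auto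
    define e where "e k = (\<Sum>p\<in>S1 \<times> S2. \<bar>F k (fst p) (snd p) - G (fst p) (snd p)\<bar>)" for k
    have e0: "e \<longlonglongrightarrow> 0"
    proof -
      have "(\<lambda>k. e k) \<longlonglongrightarrow> (\<Sum>p\<in>S1 \<times> S2. 0)"
        unfolding e_def
      proof (rule tendsto_sum)
        fix p assume "p \<in> S1 \<times> S2"
        then have "fst p \<in> V1" "snd p \<in> V2" using S by auto
        then show "(\<lambda>k. \<bar>F k (fst p) (snd p) - G (fst p) (snd p)\<bar>) \<longlonglongrightarrow> 0"
          by (intro tendsto_rabs_zero LIM_zero lim)
      qed
      then show ?thesis by simp
    qed
    have eb: "\<bar>A_sim (F k) S1 S2 - A_sim G S1 S2\<bar> \<le> e k" for k
    proof (rule A_sim_lip[OF f])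
      show "0 \<le> e k" unfolding e_def by (intro sum_nonneg) auto
      show "\<forall>x\<in>S1. \<forall>y\<in>S2. \<bar>F k x y - G x y\<bar> \<le> e k"
      proof (intro ballI)
        fix x y assume "x \<in> S1" "y \<in> S2"
        then have "(x, y) \<in> S1 \<times> S2" by simp
        then show "\<bar>F k x y - G x y\<bar> \<le> e k" unfolding e_def
          using member_le_sum[of "(x,y)" "S1 \<times> S2" "\<lambda>p. \<bar>F k (fst p) (snd p) - G (fst p) (snd p)\<bar>"] f
          by simp
      qed
    qed
    have "(\<lambda>k. A_sim (F k) S1 S2 - A_sim G S1 S2) \<longlonglongrightarrow> 0"
      by (rule Lim_null_comparison[OF _ e0]) (use eb in auto)
    then show ?thesis by (rule LIM_zero_cancel)
  qed
  have fixp: "G u v = wp * A_sim G (out_nbrs E1 u) (out_nbrs E2 v)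
          + wm * A_sim G (in_nbrs E1 u) (in_nbrs E2 v) + (1 - wp - wm) * L u v"
    if uv: "u \<in> V1" "v \<in> V2" for u v
  proof -
    have "(\<lambda>k. F (Suc k) u v) \<longlonglongrightarrow> G u v" using LIMSEQ_Suc[OF lim[OF uv]] .
    moreover have "(\<lambda>k. F (Suc k) u v) \<longlonglongrightarrow> wp * A_sim G (out_nbrs E1 u) (out_nbrs E2 v)
          + wm * A_sim G (in_nbrs E1 u) (in_nbrs E2 v) + (1 - wp - wm) * L u v"
      unfolding FS
      by (intro tendsto_add tendsto_mult tendsto_const Acont) (use o1 o2 i1 i2 uv in auto)
    ultimately show ?thesis using LIMSEQ_unique by blast
  qed
  have P2: "G u v = 1 \<longleftrightarrow> (\<exists>R. bij_simulation V1 E1 l1 V2 E2 l2 R \<and> (u, v) \<in> R)"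
    if uv: "u \<in> V1" "v \<in> V2" for u v
  proof
    assume Guv: "G u v = 1"
    define R where "R = {(x, y). x \<in> V1 \<and> y \<in> V2 \<and> G x y = 1}"
    have "bij_simulation V1 E1 l1 V2 E2 l2 R"
      unfolding bij_simulation_def
    proof (intro conjI)
      show "R \<subseteq> V1 \<times> V2" unfolding R_def by auto
      show "\<forall>(x, y)\<in>R. l1 x = l2 y \<and>
        (\<exists>lam1. bij_betw lam1 (out_nbrs E1 x) (out_nbrs E2 y) \<and> (\<forall>u'\<in>out_nbrs E1 x. (u', lam1 u') \<in> R)) \<and>
        (\<exists>lam2. bij_betw lam2 (in_nbrs E1 x) (in_nbrs E2 y) \<and> (\<forall>u''\<in>in_nbrs E1 x. (u'', lam2 u'') \<in> R))"
      proof (clarify)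
        fix x y assume "(x, y) \<in> R"
        then have xy: "x \<in> V1" "y \<in> V2" "G x y = 1" unfolding R_def by auto
        have Go: "\<forall>a\<in>out_nbrs E1 x. \<forall>b\<in>out_nbrs E2 y. G a b \<le> 1"
          using Gb o1[OF xy(1)] o2[OF xy(2)] by blast
        have Gi: "\<forall>a\<in>in_nbrs E1 x. \<forall>b\<in>in_nbrs E2 y. G a b \<le> 1"
          using Gb i1[OF xy(1)] i2[OF xy(2)] by blast
        have ao: "A_sim G (out_nbrs E1 x) (out_nbrs E2 y) \<le> 1"
          using A_sim_bounds[of "out_nbrs E1 x" "out_nbrs E2 y" G] Gb o1[OF xy(1)] o2[OF xy(2)] by blast
        have ai: "A_sim G (in_nbrs E1 x) (in_nbrs E2 y) \<le> 1"
          using A_sim_bounds[of "in_nbrs E1 x" "in_nbrs E2 y" G] Gb i1[OF xy(1)] i2[OF xy(2)] by blast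
        have eq: "wp * A_sim G (out_nbrs E1 x) (out_nbrs E2 y) + wm * A_sim G (in_nbrs E1 x) (in_nbrs E2 y)
            + (1 - wp - wm) * L x y = 1" using fixp[OF xy(1,2)] xy(3) by simp
        have Ll: "L x y \<le> 1" using L_range xy by blast
        note t = three_one[OF w ao ai Ll eq]
        have "l1 x = l2 y" using t(3) L_one xy by blast
        moreover obtain lam1 where lam1: "bij_betw lam1 (out_nbrs E1 x) (out_nbrs E2 y)"
          "\<forall>a\<in>out_nbrs E1 x. G a (lam1 a) = 1"
          using A_sim_one_iff[of "out_nbrs E1 x" "out_nbrs E2 y" G] o1[OF xy(1)] o2[OF xy(2)] Go t(1) by blast
        moreover obtain lam2 where lam2: "bij_betw lam2 (in_nbrs E1 x) (in_nbrs E2 y)"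
          "\<forall>a\<in>in_nbrs E1 x. G a (lam2 a) = 1"
          using A_sim_one_iff[of "in_nbrs E1 x" "in_nbrs E2 y" G] i1[OF xy(1)] i2[OF xy(2)] Gi t(2) by blast
        moreover have "\<forall>u'\<in>out_nbrs E1 x. (u', lam1 u') \<in> R"
          using lam1 o1[OF xy(1)] o2[OF xy(2)] unfolding R_def bij_betw_def by auto
        moreover have "\<forall>u'\<in>in_nbrs E1 x. (u', lam2 u') \<in> R"
          using lam2 i1[OF xy(1)] i2[OF xy(2)] unfolding R_def bij_betw_def by auto
        ultimately show "l1 x = l2 y \<and>
          (\<exists>lam1. bij_betw lam1 (out_nbrs E1 x) (out_nbrs E2 y) \<and> (\<forall>u'\<in>out_nbrs E1 x. (u', lam1 u') \<in> R)) \<and>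
          (\<exists>lam2. bij_betw lam2 (in_nbrs E1 x) (in_nbrs E2 y) \<and> (\<forall>u''\<in>in_nbrs E1 x. (u'', lam2 u'') \<in> R))"
          by blast
      qed
    qed
    moreover have "(u, v) \<in> R" unfolding R_def using uv Guv by simp
    ultimately show "\<exists>R. bij_simulation V1 E1 l1 V2 E2 l2 R \<and> (u, v) \<in> R" by blast
  next
    assume "\<exists>R. bij_simulation V1 E1 l1 V2 E2 l2 R \<and> (u, v) \<in> R"
    then obtain R where R: "bij_simulation V1 E1 l1 V2 E2 l2 R" "(u, v) \<in> R" by blast
    have RV: "R \<subseteq> V1 \<times> V2" using R(1) unfolding bij_simulation_def by blast
    have one: "\<forall>(x, y)\<in>R. F k x y = 1" for k
    proof (induction k)
      case 0
      show ?case using R(1) L_one RV F0 unfolding bij_simulation_def by fast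
    next
      case (Suc k)
      show ?case
      proof (clarify)
        fix x y assume xyR: "(x, y) \<in> R"
        then have xy: "x \<in> V1" "y \<in> V2" using RV by auto
        have props: "l1 x = l2 y \<and>
          (\<exists>lam1. bij_betw lam1 (out_nbrs E1 x) (out_nbrs E2 y) \<and> (\<forall>u'\<in>out_nbrs E1 x. (u', lam1 u') \<in> R)) \<and>
          (\<exists>lam2. bij_betw lam2 (in_nbrs E1 x) (in_nbrs E2 y) \<and> (\<forall>u''\<in>in_nbrs E1 x. (u'', lam2 u'') \<in> R))"
          using R(1) xyR unfolding bij_simulation_def by fast
        then obtain lam1 lam2 where
          lam1: "bij_betw lam1 (out_nbrs E1 x) (out_nbrs E2 y)" "\<forall>u'\<in>out_nbrs E1 x. (u', lam1 u') \<in> R" and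
          lam2: "bij_betw lam2 (in_nbrs E1 x) (in_nbrs E2 y)" "\<forall>u'\<in>in_nbrs E1 x. (u', lam2 u') \<in> R"
          by blast
        have Fo: "\<forall>a\<in>out_nbrs E1 x. \<forall>b\<in>out_nbrs E2 y. F k a b \<le> 1"
          using bnd o1[OF xy(1)] o2[OF xy(2)] by blast
        have Fi: "\<forall>a\<in>in_nbrs E1 x. \<forall>b\<in>in_nbrs E2 y. F k a b \<le> 1"
          using bnd i1[OF xy(1)] i2[OF xy(2)] by blast
        have "\<forall>a\<in>out_nbrs E1 x. F k a (lam1 a) = 1" using lam1(2) Suc by blast
        then have A1: "A_sim (F k) (out_nbrs E1 x) (out_nbrs E2 y) = 1"
          using A_sim_one_iff[of "out_nbrs E1 x" "out_nbrs E2 y" "F k"] o1[OF xy(1)] o2[OF xy(2)] Fo lam1(1) by blast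
        have "\<forall>a\<in>in_nbrs E1 x. F k a (lam2 a) = 1" using lam2(2) Suc by blast
        then have A2: "A_sim (F k) (in_nbrs E1 x) (in_nbrs E2 y) = 1"
          using A_sim_one_iff[of "in_nbrs E1 x" "in_nbrs E2 y" "F k"] i1[OF xy(1)] i2[OF xy(2)] Fi lam2(1) by blast
        have "L x y = 1" using props L_one xy by blast
        then show "F (Suc k) x y = 1" unfolding FS A1 A2 by simp
      qed
    qed
    have "(\<lambda>k. F k u v) = (\<lambda>k. 1)" using one R(2) by fastforce
    then have "(\<lambda>k. 1::real) \<longlonglongrightarrow> G u v" using lim[OF uv] by simp
    then show "G u v = 1" using LIMSEQ_unique tendsto_const by blast
  qed
  have P3: "FSim_bj E1 E2 L wp wm u v = FSim_bj E2 E1 L' wp wm v u"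
    if sym: "\<forall>u\<in>V1. \<forall>v\<in>V2. L u v = L' v u" and uv: "u \<in> V1" "v \<in> V2" for u v
  proof -
    define F' where "F' = F_sim E2 E1 L' wp wm"
    have F'S: "F' (Suc k) v u = wp * A_sim (F' k) (out_nbrs E2 v) (out_nbrs E1 u)
          + wm * A_sim (F' k) (in_nbrs E2 v) (in_nbrs E1 u) + (1 - wp - wm) * L' v u" for k u v
      unfolding F'_def by simp
    have eqk: "\<forall>u\<in>V1. \<forall>v\<in>V2. F k u v = F' k v u" for k
    proof (induction k)
      case 0
      show ?case using sym unfolding F0 F'_def by simp
    next
      case (Suc k)
      have key: "A_sim (F' k) S2 S1 = A_sim (F k) S1 S2" if S: "S1 \<subseteq> V1" "S2 \<subseteq> V2" for S1 S2
      proof -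
        have f: "finite S1" "finite S2" using S fin1 fin2 finite_subset by auto
        have ee: "\<forall>x\<in>S2. \<forall>y\<in>S1. F' k x y = F k y x" using Suc S by (metis subsetD)
        have "\<bar>A_sim (F' k) S2 S1 - A_sim (\<lambda>y x. F k x y) S2 S1\<bar> \<le> 0"
          by (rule A_sim_lip[OF f(2,1)]) (use ee in simp_all)
        then show ?thesis using A_sim_flip[OF f, of "F k"] by simp
      qed
      show ?case
      proof (intro ballI)
        fix u v assume uv: "u \<in> V1" "v \<in> V2"
        show "F (Suc k) u v = F' (Suc k) v u"
          unfolding FS F'S using key o1[OF uv(1)] o2[OF uv(2)] i1[OF uv(1)] i2[OF uv(2)] sym uv by simp
      qed
    qed
    have "(\<lambda>k. F k u v) = (\<lambda>k. F' k v u)" using eqk uv by auto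
    then show ?thesis unfolding FSim_bj_def F_def F'_def by simp
  qed
  have c1: "\<forall>u\<in>V1. \<forall>v\<in>V2. convergent (\<lambda>k. F_sim E1 E2 L wp wm k u v)"
    using conv unfolding F_def by simp
  have c2: "\<forall>u\<in>V1. \<forall>v\<in>V2. 0 \<le> FSim_bj E1 E2 L wp wm u v \<and> FSim_bj E1 E2 L wp wm u v \<le> 1"
    using Gb unfolding G_def by simp
  have c3: "\<forall>u\<in>V1. \<forall>v\<in>V2. FSim_bj E1 E2 L wp wm u v = 1 \<longleftrightarrow>
              (\<exists>R. bij_simulation V1 E1 l1 V2 E2 l2 R \<and> (u, v) \<in> R)"
  proof (intro ballI)
    fix u v assume "u \<in> V1" "v \<in> V2"
    then show "FSim_bj E1 E2 L wp wm u v = 1 \<longleftrightarrow> (\<exists>R. bij_simulation V1 E1 l1 V2 E2 l2 R \<and> (u, v) \<in> R)"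
      using P2[of u v] unfolding G_def by simp
  qed
  have c4: "(\<forall>u\<in>V1. \<forall>v\<in>V2. L u v = L' v u) \<longrightarrow>
            (\<forall>u\<in>V1. \<forall>v\<in>V2. FSim_bj E1 E2 L wp wm u v = FSim_bj E2 E1 L' wp wm v u)"
    using P3 by simp
  show ?thesis by (intro conjI c1 c2 c3 c4)
qed

end
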